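(* For any set $\Phi\cup\{\psi\}$ of $\mathsf{BSML}^{\sqcup}$-formulas, if $\Phi\vdash\psi$ in the natural deduction system $\mathcal{S}^{\sqcup}$ described below, then $\Phi\models\psi$.
   Context: Syntax: $\mathsf{BSML}^{\sqcup}$-formulas $\phi ::= p \mid \neg\phi \mid (\phi\wedge\phi) \mid (\phi\vee\phi) \mid \Diamond\phi \mid \mathrm{NE}\mid\phi\sqcup\phi$ ($p$ from a countably infinite set of variables). Classical formulas (denoted $\alpha,\beta$) are those built from $p,\neg,\wedge,\vee,\Diamond$ only. Abbreviations: $\Box\phi:=\neg\Diamond\neg\phi$; $\bot:=p\wedge\neg p$ (fixed $p$); $\bot\!\!\!\bot:=\bot\wedge\mathrm{NE}$. Semantics on Kripke models $M=(W,R,V)$ and states $s\subseteq W$: $s\models p$ iff $s\subseteq V(p)$; $s\dashv p$ iff $s\cap V(p)=\emptyset$; $s\models\mathrm{NE}$ iff $s\ne\emptyset$; $s\dashv\mathrm{NE}$ iff $s=\emptyset$; $s\models\neg\phi$ iff $s\dashv\phi$; $s\dashv\neg\phi$ iff $s\models\phi$; $s\models\phi\wedge\psi$ iff both; $s\dashv\phi\wedge\psi$ iff $s=t\cup u$ with $t\dashv\phi$, $u\dashv\psi$; $s\models\phi\vee\psi$ iff $s=t\cup u$ with $t\models\phi$, $u\models\psi$; $s\dashv\phi\vee\psi$ iff $s\dashv\phi$ and $s\dashv\psi$; $s\models\phi\sqcup\psi$ iff $s\models\phi$ or $s\models\psi$; $s\dashv\phi\sqcup\psi$ iff $s\dashv\phi$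 and $s\dashv\psi$; $s\models\Diamond\phi$ iff every $w\in s$ has a nonempty $t\subseteq R[w]$ with $t\models\phi$; $s\dashv\Diamond\phi$ iff $R[w]\dashv\phi$ for all $w\in s$ (where $R[w]=\{v:wRv\}$). $\Phi\models\psi$ iff every state (in every model) supporting all formulas of $\Phi$ supports $\psi$. System $\mathcal{S}^{\sqcup}$ (natural deduction with assumptions that may be discharged; $\Phi\vdash\psi$ iff there is a derivation of $\psi$ all of whose undischarged assumptions lie in $\Phi$; "$A\Leftrightarrow B$" means both one-step rules $A/B$ and $B/A$; $\phi,\psi,\chi$ range over all formulas): (a) $\wedge$I: from $\phi,\psi$ infer $\phi\wedge\psi$; $\wedge$E: from $\phi\wedge\psi$ infer $\phi$, and infer $\psi$. (b) $\neg$I: from a derivation of $\bot$ from assumption $\alpha$ infer $\neg\alpha$ discharging $\alpha$, provided the undischarged assumptions of that derivation contain no $\mathrm{NE}$; $\neg$E: from $\alpha$ and $\neg\alpha$ infer $\beta$; $\neg\neg\phi\Leftrightarrow\phi$; $\neg(\phi\wedge\psi)\Leftrightarrow\neg\phi\vee\neg\psi$; $\neg(\phi\vee\psi)\Leftrightarrow\neg\phi\wedge\neg\psi$; $\neg\mathrm{NE}\Leftrightarrow\bot$. (c) $\vee$I: from $\phi$ infer $\phi\vee\psi$, provided $\psi$ contains no $\mathrm{NE}$; $\vee$W: from $\phi$ infer $\phi\vee\phi$; Com: from $\phi\vee\psi$ infer $\psi\vee\phi$; $\vee$E: from $\phi\vee\psi$, a derivation of $\chi$ from $\phi$ and a derivation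 of $\chi$ from $\psi$, infer $\chi$ (discharging $\phi,\psi$), provided the undischarged assumptions of the two subderivations contain no $\mathrm{NE}$ and $\chi$ contains no $\sqcup$; $\vee$Mon: from $\phi\vee\psi$ and a derivation of $\chi$ from $\psi$ whose undischarged assumptions contain no $\mathrm{NE}$, infer $\phi\vee\chi$ (discharging $\psi$). (d) from $\bot\vee\phi$ infer $\phi$; from $\bot\!\!\!\bot\vee\phi$ infer any $\psi$. (e) $\Diamond$Mon: if $\psi$ is derivable from $\phi$ alone (no other undischarged assumptions), from $\Diamond\phi$ infer $\Diamond\psi$; $\Box$Mon: if $\psi$ is derivable from $\phi_1,\dots,\phi_n$ alone, from $\Box\phi_1,\dots,\Box\phi_n$ infer $\Box\psi$; $\neg\Diamond\phi\Leftrightarrow\Box\neg\phi$. (f) from $\Diamond(\phi\vee(\psi\wedge\mathrm{NE}))$ infer $\Diamond\psi$; from $\Diamond\phi,\Diamond\psi$ infer $\Diamond(\phi\vee\psi)$; from $\Box(\phi\wedge\mathrm{NE})$ infer $\Diamond\phi$; from $\Box\phi,\Diamond\psi$ infer $\Box(\phi\vee\psi)$. (g) $\sqcup$I: from $\phi$ infer $\phi\sqcup\psi$ and $\psi\sqcup\phi$; $\sqcup$E: from $\phi\sqcup\psi$, a derivation of $\chi$ from $\phi$ and one from $\psi$, infer $\chi$ (discharging); from $\phi\vee(\psi\sqcup\chi)$ infer $(\phi\vee\psi)\sqcup(\phi\vee\chi)$; $\neg(\phi\sqcup\psi)\Leftrightarrow\neg\phi\wedge\neg\psi$; axiom $\bot\sqcup\mathrm{NE}$.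 (h) $\Diamond(\phi\sqcup\psi)\Leftrightarrow\Diamond\phi\vee\Diamond\psi$; $\Box(\phi\sqcup\psi)\Leftrightarrow\Box\phi\vee\Box\psi$. *)

theory Defs
  imports Main
begin

datatype form =
    P nat
  | Neg form
  | And form form
  | Or form form
  | Dia form
  | NE
  | GD form form   (* global disjunction, \<sqcup> *)

definition Box :: "form \<Rightarrow> form" where
  "Box \<phi> = Neg (Dia (Neg \<phi>))"

definition Bot :: form where
  "Bot = And (P 0) (Neg (P 0))"

definition BotBot :: form where
  "BotBot = And Bot NE"

fun classical :: "form \<Rightarrow> bool" where
  "classical (P p) = True"
| "classical (Neg \<phi>) = classical \<phi>"
| "classical (And \<phi> \<psi>) = (classical \<phi> \<and> classical \<psi>)"
| "classical (Or \<phi> \<psi>) = (classical \<phi> \<and> classical \<psi>)"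
| "classical (Dia \<phi>) = classical \<phi>"
| "classical NE = False"
| "classical (GD \<phi> \<psi>) = False"

fun noNE :: "form \<Rightarrow> bool" where
  "noNE (P p) = True"
| "noNE (Neg \<phi>) = noNE \<phi>"
| "noNE (And \<phi> \<psi>) = (noNE \<phi> \<and> noNE \<psi>)"
| "noNE (Or \<phi> \<psi>) = (noNE \<phi> \<and> noNE \<psi>)"
| "noNE (Dia \<phi>) = noNE \<phi>"
| "noNE NE = False"
| "noNE (GD \<phi> \<psi>) = (noNE \<phi> \<and> noNE \<psi>)"

fun noGD :: "form \<Rightarrow> bool" where
  "noGD (P p) = True"
| "noGD (Neg \<phi>) = noGD \<phi>"
| "noGD (And \<phi> \<psi>) = (noGD \<phi> \<and> noGD \<psi>)"
| "noGD (Or \<phi> \<psi>) = (noGD \<phi> \<and> noGD \<psi>)"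
| "noGD (Dia \<phi>) = noGD \<phi>"
| "noGD NE = True"
| "noGD (GD \<phi> \<psi>) = False"

(* A Kripke model on world type 'w: accessibility R, valuation V; W = UNIV.
   supp = support (\<Turnstile>), anti = anti-support (\<Dashv>). *)
fun supp :: "('w \<times> 'w) set \<Rightarrow> (nat \<Rightarrow> 'w set) \<Rightarrow> 'w set \<Rightarrow> form \<Rightarrow> bool"
and anti :: "('w \<times> 'w) set \<Rightarrow> (nat \<Rightarrow> 'w set) \<Rightarrow> 'w set \<Rightarrow> form \<Rightarrow> bool" where
  "supp R V s (P p) = (s \<subseteq> V p)"
| "anti R V s (P p) = (s \<inter> V p = {})"
| "supp R V s NE = (s \<noteq> {})"
| "anti R V s NE = (s = {})"
| "supp R V s (Neg \<phi>) = anti R V s \<phi>"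
| "anti R V s (Neg \<phi>) = supp R V s \<phi>"
| "supp R V s (And \<phi> \<psi>) = (supp R V s \<phi> \<and> supp R V s \<psi>)"
| "anti R V s (And \<phi> \<psi>) = (\<exists>t u. s = t \<union> u \<and> anti R V t \<phi> \<and> anti R V u \<psi>)"
| "supp R V s (Or \<phi> \<psi>) = (\<exists>t u. s = t \<union> u \<and> supp R V t \<phi> \<and> supp R V u \<psi>)"
| "anti R V s (Or \<phi> \<psi>) = (anti R V s \<phi> \<and> anti R V s \<psi>)"
| "supp R V s (GD \<phi> \<psi>) = (supp R V s \<phi> \<or> supp R V s \<psi>)"
| "anti R V s (GD \<phi> \<psi>) = (anti R V s \<phi> \<and> anti R V s \<psi>)"
| "supp R V s (Dia \<phi>) = (\<forall>w\<in>s. \<exists>t. t \<noteq> {} \<and> t \<subseteq> R `` {w} \<and> supp R V t \<phi>)"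
| "anti R V s (Dia \<phi>) = (\<forall>w\<in>s. anti R V (R `` {w}) \<phi>)"

(* der \<Gamma> \<phi>: there is a derivation of \<phi> whose set of undischarged assumptions is \<Gamma>.
   Discharging an assumption \<phi> removes it from the set (vacuous discharge allowed). *)
inductive der :: "form set \<Rightarrow> form \<Rightarrow> bool" where
  assm: "der {\<phi>} \<phi>"
| conjI: "der \<Gamma> \<phi> \<Longrightarrow> der \<Delta> \<psi> \<Longrightarrow> der (\<Gamma> \<union> \<Delta>) (And \<phi> \<psi>)"
| conjE1: "der \<Gamma> (And \<phi> \<psi>) \<Longrightarrow> der \<Gamma> \<phi>"
| conjE2: "der \<Gamma> (And \<phi> \<psi>) \<Longrightarrow> der \<Gamma> \<psi>"
| negI: "classical \<alpha> \<Longrightarrow> der \<Gamma> Bot \<Longrightarrow> (\<forall>\<chi>\<in>\<Gamma>. noNE \<chi>) \<Longrightarrow> der (\<Gamma> - {\<alpha>}) (Neg \<alpha>)"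
| negE: "classical \<alpha> \<Longrightarrow> classical \<beta> \<Longrightarrow> der \<Gamma> \<alpha> \<Longrightarrow> der \<Delta> (Neg \<alpha>) \<Longrightarrow> der (\<Gamma> \<union> \<Delta>) \<beta>"
| dnegE: "der \<Gamma> (Neg (Neg \<phi>)) \<Longrightarrow> der \<Gamma> \<phi>"
| dnegI: "der \<Gamma> \<phi> \<Longrightarrow> der \<Gamma> (Neg (Neg \<phi>))"
| dmAnd1: "der \<Gamma> (Neg (And \<phi> \<psi>)) \<Longrightarrow> der \<Gamma> (Or (Neg \<phi>) (Neg \<psi>))"
| dmAnd2: "der \<Gamma> (Or (Neg \<phi>) (Neg \<psi>)) \<Longrightarrow> der \<Gamma> (Neg (And \<phi> \<psi>))"
| dmOr1: "der \<Gamma> (Neg (Or \<phi> \<psi>)) \<Longrightarrow> der \<Gamma> (And (Neg \<phi>) (Neg \<psi>))"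
| dmOr2: "der \<Gamma> (And (Neg \<phi>) (Neg \<psi>)) \<Longrightarrow> der \<Gamma> (Neg (Or \<phi> \<psi>))"
| negNE1: "der \<Gamma> (Neg NE) \<Longrightarrow> der \<Gamma> Bot"
| negNE2: "der \<Gamma> Bot \<Longrightarrow> der \<Gamma> (Neg NE)"
| disjI: "der \<Gamma> \<phi> \<Longrightarrow> noNE \<psi> \<Longrightarrow> der \<Gamma> (Or \<phi> \<psi>)"
| disjW: "der \<Gamma> \<phi> \<Longrightarrow> der \<Gamma> (Or \<phi> \<phi>)"
| disjCom: "der \<Gamma> (Or \<phi> \<psi>) \<Longrightarrow> der \<Gamma> (Or \<psi> \<phi>)"
| disjE: "der \<Gamma> (Or \<phi> \<psi>) \<Longrightarrow> der \<Delta>1 \<chi> \<Longrightarrow> der \<Delta>2 \<chi> \<Longrightarrow>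
          (\<forall>\<theta>\<in>\<Delta>1 - {\<phi>}. noNE \<theta>) \<Longrightarrow> (\<forall>\<theta>\<in>\<Delta>2 - {\<psi>}. noNE \<theta>) \<Longrightarrow> noGD \<chi> \<Longrightarrow>
          der (\<Gamma> \<union> (\<Delta>1 - {\<phi>}) \<union> (\<Delta>2 - {\<psi>})) \<chi>"
| disjMon: "der \<Gamma> (Or \<phi> \<psi>) \<Longrightarrow> der \<Delta> \<chi> \<Longrightarrow> (\<forall>\<theta>\<in>\<Delta> - {\<psi>}. noNE \<theta>) \<Longrightarrow>
          der (\<Gamma> \<union> (\<Delta> - {\<psi>})) (Or \<phi> \<chi>)"
| botDisj: "der \<Gamma> (Or Bot \<phi>) \<Longrightarrow> der \<Gamma> \<phi>"
| botbotDisj: "der \<Gamma> (Or BotBot \<phi>) \<Longrightarrow> der \<Gamma> \<psi>"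
| diaMon: "der \<Gamma>0 \<psi> \<Longrightarrow> \<Gamma>0 \<subseteq> {\<phi>} \<Longrightarrow> der \<Gamma> (Dia \<phi>) \<Longrightarrow> der \<Gamma> (Dia \<psi>)"
| boxMon: "finite A \<Longrightarrow> der \<Gamma>0 \<psi> \<Longrightarrow> \<Gamma>0 \<subseteq> A \<Longrightarrow> (\<forall>\<phi>\<in>A. der (G \<phi>) (Box \<phi>)) \<Longrightarrow>
          der (\<Union>\<phi>\<in>A. G \<phi>) (Box \<psi>)"
| negDia1: "der \<Gamma> (Neg (Dia \<phi>)) \<Longrightarrow> der \<Gamma> (Box (Neg \<phi>))"
| negDia2: "der \<Gamma> (Box (Neg \<phi>)) \<Longrightarrow> der \<Gamma> (Neg (Dia \<phi>))"
| diaNE: "der \<Gamma> (Dia (Or \<phi> (And \<psi> NE))) \<Longrightarrow> der \<Gamma> (Dia \<psi>)"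
| diaJoin: "der \<Gamma> (Dia \<phi>) \<Longrightarrow> der \<Delta> (Dia \<psi>) \<Longrightarrow> der (\<Gamma> \<union> \<Delta>) (Dia (Or \<phi> \<psi>))"
| boxNE: "der \<Gamma> (Box (And \<phi> NE)) \<Longrightarrow> der \<Gamma> (Dia \<phi>)"
| boxDia: "der \<Gamma> (Box \<phi>) \<Longrightarrow> der \<Delta> (Dia \<psi>) \<Longrightarrow> der (\<Gamma> \<union> \<Delta>) (Box (Or \<phi> \<psi>))"
| gdI1: "der \<Gamma> \<phi> \<Longrightarrow> der \<Gamma> (GD \<phi> \<psi>)"
| gdI2: "der \<Gamma> \<phi> \<Longrightarrow> der \<Gamma> (GD \<psi> \<phi>)"
| gdE: "der \<Gamma> (GD \<phi> \<psi>) \<Longrightarrow> der \<Delta>1 \<chi> \<Longrightarrow> der \<Delta>2 \<chi> \<Longrightarrow>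
          der (\<Gamma> \<union> (\<Delta>1 - {\<phi>}) \<union> (\<Delta>2 - {\<psi>})) \<chi>"
| gdDistr: "der \<Gamma> (Or \<phi> (GD \<psi> \<chi>)) \<Longrightarrow> der \<Gamma> (GD (Or \<phi> \<psi>) (Or \<phi> \<chi>))"
| negGD1: "der \<Gamma> (Neg (GD \<phi> \<psi>)) \<Longrightarrow> der \<Gamma> (And (Neg \<phi>) (Neg \<psi>))"
| negGD2: "der \<Gamma> (And (Neg \<phi>) (Neg \<psi>)) \<Longrightarrow> der \<Gamma> (Neg (GD \<phi> \<psi>))"
| gdAx: "der {} (GD Bot NE)"
| diaGD1: "der \<Gamma> (Dia (GD \<phi> \<psi>)) \<Longrightarrow> der \<Gamma> (Or (Dia \<phi>) (Dia \<psi>))"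
| diaGD2: "der \<Gamma> (Or (Dia \<phi>) (Dia \<psi>)) \<Longrightarrow> der \<Gamma> (Dia (GD \<phi> \<psi>))"
| boxGD1: "der \<Gamma> (Box (GD \<phi> \<psi>)) \<Longrightarrow> der \<Gamma> (Or (Box \<phi>) (Box \<psi>))"
| boxGD2: "der \<Gamma> (Or (Box \<phi>) (Box \<psi>)) \<Longrightarrow> der \<Gamma> (Box (GD \<phi> \<psi>))"

definition derivable :: "form set \<Rightarrow> form \<Rightarrow> bool" where
  "derivable \<Phi> \<psi> = (\<exists>\<Gamma>. der \<Gamma> \<psi> \<and> \<Gamma> \<subseteq> \<Phi>)"

end

theory Submission
  imports Defs
begin

lemma supp_Bot[simp]: "supp R V s Bot = (s = {})"
  by (auto simp: Bot_def)

lemma supp_BotBot[simp]: "supp R V s BotBot = False"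
  by (auto simp: BotBot_def)

lemma supp_Box[simp]: "supp R V s (Box \<phi>) = (\<forall>w\<in>s. supp R V (R `` {w}) \<phi>)"
  by (simp add: Box_def)

lemma empty_team: "noNE \<phi> \<Longrightarrow> supp R V {} \<phi> \<and> anti R V {} \<phi>"
  by (induction \<phi>) auto

lemma downward: "noNE \<phi> \<Longrightarrow> (\<forall>s t. supp R V s \<phi> \<longrightarrow> t \<subseteq> s \<longrightarrow> supp R V t \<phi>)
   \<and> (\<forall>s t. anti R V s \<phi> \<longrightarrow> t \<subseteq> s \<longrightarrow> anti R V t \<phi>)"
proof (induction \<phi>)
  case (And \<phi>1 \<phi>2)
  then have I1: "\<forall>s t. supp R V s \<phi>1 \<longrightarrow> t \<subseteq> s \<longrightarrow> supp R V t \<phi>1"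
      "\<forall>s t. anti R V s \<phi>1 \<longrightarrow> t \<subseteq> s \<longrightarrow> anti R V t \<phi>1"
      "\<forall>s t. supp R V s \<phi>2 \<longrightarrow> t \<subseteq> s \<longrightarrow> supp R V t \<phi>2"
      "\<forall>s t. anti R V s \<phi>2 \<longrightarrow> t \<subseteq> s \<longrightarrow> anti R V t \<phi>2" by auto
  have "anti R V t (And \<phi>1 \<phi>2)" if H: "anti R V s (And \<phi>1 \<phi>2)" "t \<subseteq> s" for s t
  proof -
    obtain a b where "s = a \<union> b" "anti R V a \<phi>1" "anti R V b \<phi>2" using H(1) by auto
    then have "t = (t \<inter> a) \<union> (t \<inter> b)" "anti R V (t \<inter> a) \<phi>1" "anti R V (t \<inter> b) \<phi>2"
      using I1 H by auto
    then show ?thesis by auto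
  qed
  then show ?case using I1 by auto
next
  case (Or \<phi>1 \<phi>2)
  then have I1: "\<forall>s t. supp R V s \<phi>1 \<longrightarrow> t \<subseteq> s \<longrightarrow> supp R V t \<phi>1"
      "\<forall>s t. anti R V s \<phi>1 \<longrightarrow> t \<subseteq> s \<longrightarrow> anti R V t \<phi>1"
      "\<forall>s t. supp R V s \<phi>2 \<longrightarrow> t \<subseteq> s \<longrightarrow> supp R V t \<phi>2"
      "\<forall>s t. anti R V s \<phi>2 \<longrightarrow> t \<subseteq> s \<longrightarrow> anti R V t \<phi>2" by auto
  have "supp R V t (Or \<phi>1 \<phi>2)" if H: "supp R V s (Or \<phi>1 \<phi>2)" "t \<subseteq> s" for s t
  proof -
    obtain a b where "s = a \<union> b" "supp R V a \<phi>1" "supp R V b \<phi>2" using H(1) by auto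
    then have "t = (t \<inter> a) \<union> (t \<inter> b)" "supp R V (t \<inter> a) \<phi>1" "supp R V (t \<inter> b) \<phi>2"
      using I1 H by auto
    then show ?thesis by auto
  qed
  then show ?case using I1 by auto
qed auto

lemma supp_down: "noNE \<phi> \<Longrightarrow> supp R V s \<phi> \<Longrightarrow> t \<subseteq> s \<Longrightarrow> supp R V t \<phi>"
  using downward by blast
lemma anti_down: "noNE \<phi> \<Longrightarrow> anti R V s \<phi> \<Longrightarrow> t \<subseteq> s \<Longrightarrow> anti R V t \<phi>"
  using downward by blast

lemma down_set: "\<forall>\<gamma>\<in>A. noNE \<gamma> \<Longrightarrow> \<forall>\<gamma>\<in>A. supp R V s \<gamma> \<Longrightarrow> t \<subseteq> s \<Longrightarrow> \<forall>\<gamma>\<in>A. supp R V t \<gamma>"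
  using supp_down by blast

lemma singleton_split: "{w} = t \<union> u \<Longrightarrow> t = {w} \<or> u = {w}"
  by (auto simp: singleton_Un_iff)

lemma antiAndI: "s = t \<union> u \<Longrightarrow> anti R V t a \<Longrightarrow> anti R V u b \<Longrightarrow> anti R V s (And a b)"
  by auto
lemma suppOrI: "s = t \<union> u \<Longrightarrow> supp R V t a \<Longrightarrow> supp R V u b \<Longrightarrow> supp R V s (Or a b)"
  by auto

lemma union_closed: "noGD \<phi> \<Longrightarrow> (\<forall>s t. supp R V s \<phi> \<longrightarrow> supp R V t \<phi> \<longrightarrow> supp R V (s \<union> t) \<phi>)
   \<and> (\<forall>s t. anti R V s \<phi> \<longrightarrow> anti R V t \<phi> \<longrightarrow> anti R V (s \<union> t) \<phi>)"
proof (induction \<phi>)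
  case (And \<phi>1 \<phi>2)
  then have I1: "\<forall>s t. supp R V s \<phi>1 \<longrightarrow> supp R V t \<phi>1 \<longrightarrow> supp R V (s \<union> t) \<phi>1"
      "\<forall>s t. anti R V s \<phi>1 \<longrightarrow> anti R V t \<phi>1 \<longrightarrow> anti R V (s \<union> t) \<phi>1"
      "\<forall>s t. supp R V s \<phi>2 \<longrightarrow> supp R V t \<phi>2 \<longrightarrow> supp R V (s \<union> t) \<phi>2"
      "\<forall>s t. anti R V s \<phi>2 \<longrightarrow> anti R V t \<phi>2 \<longrightarrow> anti R V (s \<union> t) \<phi>2" by auto
  have "anti R V (s \<union> t) (And \<phi>1 \<phi>2)" if H: "anti R V s (And \<phi>1 \<phi>2)" "anti R V t (And \<phi>1 \<phi>2)" for s t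
  proof -
    obtain a b where ab: "s = a \<union> b" "anti R V a \<phi>1" "anti R V b \<phi>2" using H(1) by auto
    obtain c d where cd: "t = c \<union> d" "anti R V c \<phi>1" "anti R V d \<phi>2" using H(2) by auto
    show ?thesis
      by (rule antiAndI[where t="a \<union> c" and u="b \<union> d"]) (use ab cd I1 in blast)+
  qed
  then show ?case using I1 by auto
next
  case (Or \<phi>1 \<phi>2)
  then have I1: "\<forall>s t. supp R V s \<phi>1 \<longrightarrow> supp R V t \<phi>1 \<longrightarrow> supp R V (s \<union> t) \<phi>1"
      "\<forall>s t. anti R V s \<phi>1 \<longrightarrow> anti R V t \<phi>1 \<longrightarrow> anti R V (s \<union> t) \<phi>1"
      "\<forall>s t. supp R V s \<phi>2 \<longrightarrow> supp R V t \<phi>2 \<longrightarrow> supp R V (s \<union> t) \<phi>2"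
      "\<forall>s t. anti R V s \<phi>2 \<longrightarrow> anti R V t \<phi>2 \<longrightarrow> anti R V (s \<union> t) \<phi>2" by auto
  have "supp R V (s \<union> t) (Or \<phi>1 \<phi>2)" if H: "supp R V s (Or \<phi>1 \<phi>2)" "supp R V t (Or \<phi>1 \<phi>2)" for s t
  proof -
    obtain a b where ab: "s = a \<union> b" "supp R V a \<phi>1" "supp R V b \<phi>2" using H(1) by auto
    obtain c d where cd: "t = c \<union> d" "supp R V c \<phi>1" "supp R V d \<phi>2" using H(2) by auto
    show ?thesis
      by (rule suppOrI[where t="a \<union> c" and u="b \<union> d"]) (use ab cd I1 in blast)+
  qed
  then show ?case using I1 by auto
next
  case (Dia \<phi>)
  then show ?case by auto
qed auto

lemma supp_union: "noGD \<phi> \<Longrightarrow> supp R V s \<phi> \<Longrightarrow> supp R V t \<phi> \<Longrightarrow> supp R V (s \<union> t) \<phi>"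
  using union_closed by blast

lemma classical_noNE: "classical \<phi> \<Longrightarrow> noNE \<phi>"
  by (induction \<phi>) auto

lemma flat: "classical \<phi> \<Longrightarrow> (\<forall>s. supp R V s \<phi> \<longleftrightarrow> (\<forall>w\<in>s. supp R V {w} \<phi>))
   \<and> (\<forall>s. anti R V s \<phi> \<longleftrightarrow> (\<forall>w\<in>s. anti R V {w} \<phi>))"
proof (induction \<phi>)
  case (P p)
  show ?case by auto
next
  case NE
  then show ?case by simp
next
  case (GD \<phi>1 \<phi>2)
  then show ?case by simp
next
  case (Dia \<phi>)
  show ?case by simp
next
  case (Neg \<phi>)
  have "classical \<phi>" using Neg.prems by simp
  then have "(\<forall>s. supp R V s \<phi> \<longleftrightarrow> (\<forall>w\<in>s. supp R V {w} \<phi>))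
   \<and> (\<forall>s. anti R V s \<phi> \<longleftrightarrow> (\<forall>w\<in>s. anti R V {w} \<phi>))" using Neg.IH by blast
  then show ?case unfolding supp.simps anti.simps by blast
next
  case (And \<phi>1 \<phi>2)
  have c: "classical \<phi>1" "classical \<phi>2" using And.prems by auto
  note IH1 = And.IH(1)[OF c(1)] and IH2 = And.IH(2)[OF c(2)]
  note I1s = IH1[THEN conjunct1, rule_format] and I1a = IH1[THEN conjunct2, rule_format]
   and I2s = IH2[THEN conjunct1, rule_format] and I2a = IH2[THEN conjunct2, rule_format]
  have e1: "anti R V {} \<phi>1" and e2: "anti R V {} \<phi>2"
    using empty_team classical_noNE c by auto
  have S: "supp R V s (And \<phi>1 \<phi>2) \<longleftrightarrow> (\<forall>w\<in>s. supp R V {w} (And \<phi>1 \<phi>2))" for s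
    using I1s[of s] I2s[of s] by auto
  have "anti R V s (And \<phi>1 \<phi>2) \<longleftrightarrow> (\<forall>w\<in>s. anti R V {w} (And \<phi>1 \<phi>2))" for s
  proof
    assume "anti R V s (And \<phi>1 \<phi>2)"
    then obtain t u where tu: "s = t \<union> u" "anti R V t \<phi>1" "anti R V u \<phi>2" by auto
    show "\<forall>w\<in>s. anti R V {w} (And \<phi>1 \<phi>2)"
    proof
      fix w assume "w \<in> s"
      then consider "w \<in> t" | "w \<in> u" using tu by blast
      then show "anti R V {w} (And \<phi>1 \<phi>2)"
      proof cases
        case 1
        then have "anti R V {w} \<phi>1" using tu I1a[of t] by blast
        then show ?thesis by (intro antiAndI[where t="{w}" and u="{}"]) (auto simp: e2)
      next
        case 2
        then have "anti R V {w} \<phi>2" using tu I2a[of u] by blast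
        then show ?thesis by (intro antiAndI[where t="{}" and u="{w}"]) (auto simp: e1)
      qed
    qed
  next
    assume H: "\<forall>w\<in>s. anti R V {w} (And \<phi>1 \<phi>2)"
    have D: "\<forall>w\<in>s. anti R V {w} \<phi>1 \<or> anti R V {w} \<phi>2"
    proof
      fix w assume "w \<in> s"
      with H obtain t u where tu: "{w} = t \<union> u" "anti R V t \<phi>1" "anti R V u \<phi>2" by auto
      from singleton_split[OF tu(1)] show "anti R V {w} \<phi>1 \<or> anti R V {w} \<phi>2"
        using tu by blast
    qed
    show "anti R V s (And \<phi>1 \<phi>2)"
    proof (rule antiAndI[where t="{w\<in>s. anti R V {w} \<phi>1}" and u="{w\<in>s. anti R V {w} \<phi>2}"])
      show "s = {w \<in> s. anti R V {w} \<phi>1} \<union> {w \<in> s. anti R V {w} \<phi>2}" using D by blast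
      show "anti R V {w \<in> s. anti R V {w} \<phi>1} \<phi>1" using I1a[of "{w \<in> s. anti R V {w} \<phi>1}"] by blast
      show "anti R V {w \<in> s. anti R V {w} \<phi>2} \<phi>2" using I2a[of "{w \<in> s. anti R V {w} \<phi>2}"] by blast
    qed
  qed
  then show ?case using S by blast
next
  case (Or \<phi>1 \<phi>2)
  have c: "classical \<phi>1" "classical \<phi>2" using Or.prems by auto
  note IH1 = Or.IH(1)[OF c(1)] and IH2 = Or.IH(2)[OF c(2)]
  note I1s = IH1[THEN conjunct1, rule_format] and I1a = IH1[THEN conjunct2, rule_format]
   and I2s = IH2[THEN conjunct1, rule_format] and I2a = IH2[THEN conjunct2, rule_format]
  have e1: "supp R V {} \<phi>1" and e2: "supp R V {} \<phi>2"
    using empty_team classical_noNE c by auto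
  have S: "anti R V s (Or \<phi>1 \<phi>2) \<longleftrightarrow> (\<forall>w\<in>s. anti R V {w} (Or \<phi>1 \<phi>2))" for s
    using I1a[of s] I2a[of s] by auto
  have "supp R V s (Or \<phi>1 \<phi>2) \<longleftrightarrow> (\<forall>w\<in>s. supp R V {w} (Or \<phi>1 \<phi>2))" for s
  proof
    assume "supp R V s (Or \<phi>1 \<phi>2)"
    then obtain t u where tu: "s = t \<union> u" "supp R V t \<phi>1" "supp R V u \<phi>2" by auto
    show "\<forall>w\<in>s. supp R V {w} (Or \<phi>1 \<phi>2)"
    proof
      fix w assume "w \<in> s"
      then consider "w \<in> t" | "w \<in> u" using tu by blast
      then show "supp R V {w} (Or \<phi>1 \<phi>2)"
      proof cases
        case 1
        then have "supp R V {w} \<phi>1" using tu I1s[of t] by blast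
        then show ?thesis by (intro suppOrI[where t="{w}" and u="{}"]) (auto simp: e2)
      next
        case 2
        then have "supp R V {w} \<phi>2" using tu I2s[of u] by blast
        then show ?thesis by (intro suppOrI[where t="{}" and u="{w}"]) (auto simp: e1)
      qed
    qed
  next
    assume H: "\<forall>w\<in>s. supp R V {w} (Or \<phi>1 \<phi>2)"
    have D: "\<forall>w\<in>s. supp R V {w} \<phi>1 \<or> supp R V {w} \<phi>2"
    proof
      fix w assume "w \<in> s"
      with H obtain t u where tu: "{w} = t \<union> u" "supp R V t \<phi>1" "supp R V u \<phi>2" by auto
      from singleton_split[OF tu(1)] show "supp R V {w} \<phi>1 \<or> supp R V {w} \<phi>2"
        using tu by blast
    qed
    show "supp R V s (Or \<phi>1 \<phi>2)"
    proof (rule suppOrI[where t="{w\<in>s. supp R V {w} \<phi>1}" and u="{w\<in>s. supp R V {w} \<phi>2}"])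
      show "s = {w \<in> s. supp R V {w} \<phi>1} \<union> {w \<in> s. supp R V {w} \<phi>2}" using D by blast
      show "supp R V {w \<in> s. supp R V {w} \<phi>1} \<phi>1" using I1s[of "{w \<in> s. supp R V {w} \<phi>1}"] by blast
      show "supp R V {w \<in> s. supp R V {w} \<phi>2} \<phi>2" using I2s[of "{w \<in> s. supp R V {w} \<phi>2}"] by blast
    qed
  qed
  then show ?case using S by blast
qed

lemma biv: "classical \<phi> \<Longrightarrow> \<forall>w. supp R V {w} \<phi> \<or> anti R V {w} \<phi>"
proof (induction \<phi>)
  case (And \<phi>1 \<phi>2)
  have e1: "anti R V {} \<phi>1" and e2: "anti R V {} \<phi>2"
    using empty_team classical_noNE And.prems by auto
  show ?case
  proof
    fix w
    have "supp R V {w} \<phi>1 \<or> anti R V {w} \<phi>1" "supp R V {w} \<phi>2 \<or> anti R V {w} \<phi>2"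
      using And by auto
    moreover have "anti R V {w} \<phi>1 \<Longrightarrow> anti R V {w} (And \<phi>1 \<phi>2)"
      by (rule antiAndI[where t="{w}" and u="{}"]) (auto simp: e2)
    moreover have "anti R V {w} \<phi>2 \<Longrightarrow> anti R V {w} (And \<phi>1 \<phi>2)"
      by (rule antiAndI[where t="{}" and u="{w}"]) (auto simp: e1)
    ultimately show "supp R V {w} (And \<phi>1 \<phi>2) \<or> anti R V {w} (And \<phi>1 \<phi>2)" by auto
  qed
next
  case (Or \<phi>1 \<phi>2)
  have e1: "supp R V {} \<phi>1" and e2: "supp R V {} \<phi>2"
    using empty_team classical_noNE Or.prems by auto
  show ?case
  proof
    fix w
    have "supp R V {w} \<phi>1 \<or> anti R V {w} \<phi>1" "supp R V {w} \<phi>2 \<or> anti R V {w} \<phi>2"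
      using Or by auto
    moreover have "supp R V {w} \<phi>1 \<Longrightarrow> supp R V {w} (Or \<phi>1 \<phi>2)"
      by (rule suppOrI[where t="{w}" and u="{}"]) (auto simp: e2)
    moreover have "supp R V {w} \<phi>2 \<Longrightarrow> supp R V {w} (Or \<phi>1 \<phi>2)"
      by (rule suppOrI[where t="{}" and u="{w}"]) (auto simp: e1)
    ultimately show "supp R V {w} (Or \<phi>1 \<phi>2) \<or> anti R V {w} (Or \<phi>1 \<phi>2)" by auto
  qed
next
  case (Dia \<phi>)
  show ?case
  proof
    fix w
    show "supp R V {w} (Dia \<phi>) \<or> anti R V {w} (Dia \<phi>)"
    proof (cases "\<exists>v\<in>R `` {w}. supp R V {v} \<phi>")
      case True
      then obtain v where "v \<in> R `` {w}" "supp R V {v} \<phi>" by blast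
      then have "supp R V {w} (Dia \<phi>)" unfolding supp.simps by blast
      then show ?thesis by blast
    next
      case False
      have c: "classical \<phi>" using Dia.prems by simp
      have "\<forall>v\<in>R `` {w}. anti R V {v} \<phi>" using Dia.IH[OF c] False by blast
      moreover have "\<forall>s. anti R V s \<phi> = (\<forall>w\<in>s. anti R V {w} \<phi>)"
        by (rule conjunct2[OF flat[OF c]])
      ultimately have "anti R V (R `` {w}) \<phi>" by blast
      then show ?thesis by simp
    qed
  qed
qed auto

lemma excl: "classical \<phi> \<Longrightarrow> supp R V s \<phi> \<Longrightarrow> anti R V s \<phi> \<Longrightarrow> s = {}"
proof (induction \<phi> arbitrary: s)
  case (And \<phi>1 \<phi>2)
  then obtain t u where "s = t \<union> u" "anti R V t \<phi>1" "anti R V u \<phi>2" by auto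
  moreover have "supp R V t \<phi>1" "supp R V u \<phi>2"
    using And calculation supp_down classical_noNE by (auto intro: supp_down)
  ultimately show ?case using And by auto
next
  case (Or \<phi>1 \<phi>2)
  then obtain t u where "s = t \<union> u" "supp R V t \<phi>1" "supp R V u \<phi>2" by auto
  moreover have "anti R V t \<phi>1" "anti R V u \<phi>2"
    using Or calculation classical_noNE by (auto intro: anti_down)
  ultimately show ?case using Or by auto
next
  case (Dia \<phi>)
  show ?case
  proof (rule ccontr)
    assume "s \<noteq> {}"
    then obtain w where w: "w \<in> s" by auto
    have "\<forall>w\<in>s. \<exists>t. t \<noteq> {} \<and> t \<subseteq> R `` {w} \<and> supp R V t \<phi>" using Dia.prems by simp
    then obtain t where t: "t \<noteq> {}" "t \<subseteq> R `` {w}" "supp R V t \<phi>" using w by blast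
    have "anti R V (R `` {w}) \<phi>" using Dia.prems w by auto
    then have "anti R V t \<phi>" using t Dia.prems classical_noNE by (auto intro: anti_down)
    then show False using Dia t by auto
  qed
qed auto

lemma sound: "der \<Gamma> \<phi> \<Longrightarrow> \<forall>s. (\<forall>\<gamma>\<in>\<Gamma>. supp R V s \<gamma>) \<longrightarrow> supp R V s \<phi>"
proof (induction rule: der.induct)
  case (assm \<phi>)
  then show ?case by simp
next
  case (conjI \<Gamma> \<phi> \<Delta> \<psi>)
  show ?case
  proof (intro allI impI)
    fix s assume s: "\<forall>\<gamma>\<in>\<Gamma> \<union> \<Delta>. supp R V s \<gamma>"
    have "supp R V s \<phi>" using conjI.IH(1) s by blast
    moreover have "supp R V s \<psi>" using conjI.IH(2) s by blast
    ultimately show "supp R V s (And \<phi> \<psi>)" by simp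
  qed
next
  case (conjE1 \<Gamma> \<phi> \<psi>)
  then show ?case by simp
next
  case (conjE2 \<Gamma> \<phi> \<psi>)
  then show ?case by simp
next
  case (negI \<alpha> \<Gamma>)
  show ?case
  proof (intro allI impI)
    fix s assume s: "\<forall>\<gamma>\<in>\<Gamma> - {\<alpha>}. supp R V s \<gamma>"
    have nn: "\<forall>\<gamma>\<in>\<Gamma> - {\<alpha>}. noNE \<gamma>" using negI.hyps(3) by blast
    have "\<forall>w\<in>s. anti R V {w} \<alpha>"
    proof
      fix w assume w: "w \<in> s"
      then have "{w} \<subseteq> s" by blast
      then have sw: "\<forall>\<gamma>\<in>\<Gamma> - {\<alpha>}. supp R V {w} \<gamma>" by (rule down_set[OF nn s])
      have "\<not> supp R V {w} \<alpha>"
      proof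
        assume "supp R V {w} \<alpha>"
        with sw have "\<forall>\<gamma>\<in>\<Gamma>. supp R V {w} \<gamma>" by blast
        then have "supp R V {w} Bot" using negI.IH by blast
        then show False by simp
      qed
      moreover have "supp R V {w} \<alpha> \<or> anti R V {w} \<alpha>"
        by (rule biv[OF negI.hyps(1), THEN spec])
      ultimately show "anti R V {w} \<alpha>" by blast
    qed
    moreover have "anti R V s \<alpha> = (\<forall>w\<in>s. anti R V {w} \<alpha>)"
      by (rule flat[OF negI.hyps(1), THEN conjunct2, THEN spec])
    ultimately have "anti R V s \<alpha>" by blast
    then show "supp R V s (Neg \<alpha>)" by simp
  qed
next
  case (negE \<alpha> \<beta> \<Gamma> \<Delta>)
  show ?case
  proof (intro allI impI)
    fix s assume s: "\<forall>\<gamma>\<in>\<Gamma> \<union> \<Delta>. supp R V s \<gamma>"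
    have "supp R V s \<alpha>" using negE.IH(1) s by blast
    moreover have "supp R V s (Neg \<alpha>)" using negE.IH(2) s by blast
    ultimately have "s = {}" using excl[OF negE.hyps(1)] by simp
    then show "supp R V s \<beta>" using empty_team[OF classical_noNE[OF negE.hyps(2)]] by blast
  qed
next
  case (dnegE \<Gamma> \<phi>)
  then show ?case by simp
next
  case (dnegI \<Gamma> \<phi>)
  then show ?case by simp
next
  case (dmAnd1 \<Gamma> \<phi> \<psi>)
  then show ?case by simp
next
  case (dmAnd2 \<Gamma> \<phi> \<psi>)
  then show ?case by simp
next
  case (dmOr1 \<Gamma> \<phi> \<psi>)
  then show ?case by simp
next
  case (dmOr2 \<Gamma> \<phi> \<psi>)
  then show ?case by simp
next
  case (negNE1 \<Gamma>)
  then show ?case by simp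
next
  case (negNE2 \<Gamma>)
  then show ?case by simp
next
  case (disjI \<Gamma> \<phi> \<psi>)
  show ?case
  proof (intro allI impI)
    fix s assume s: "\<forall>\<gamma>\<in>\<Gamma>. supp R V s \<gamma>"
    have "supp R V s \<phi>" using disjI.IH s by blast
    moreover have "supp R V {} \<psi>" using empty_team[OF disjI.hyps(2)] by blast
    ultimately show "supp R V s (Or \<phi> \<psi>)" by (intro suppOrI[where t=s and u="{}"]) auto
  qed
next
  case (disjW \<Gamma> \<phi>)
  show ?case
  proof (intro allI impI)
    fix s assume s: "\<forall>\<gamma>\<in>\<Gamma>. supp R V s \<gamma>"
    have "supp R V s \<phi>" using disjW.IH s by blast
    then show "supp R V s (Or \<phi> \<phi>)" by (intro suppOrI[where t=s and u=s]) auto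
  qed
next
  case (disjCom \<Gamma> \<phi> \<psi>)
  show ?case
  proof (intro allI impI)
    fix s assume s: "\<forall>\<gamma>\<in>\<Gamma>. supp R V s \<gamma>"
    have "supp R V s (Or \<phi> \<psi>)" using disjCom.IH s by blast
    then obtain t u where "s = t \<union> u" "supp R V t \<phi>" "supp R V u \<psi>" by auto
    then show "supp R V s (Or \<psi> \<phi>)" by (intro suppOrI[where t=u and u=t]) auto
  qed
next
  case (disjE \<Gamma> \<phi> \<psi> \<Delta>1 \<chi> \<Delta>2)
  show ?case
  proof (intro allI impI)
    fix s assume s: "\<forall>\<gamma>\<in>\<Gamma> \<union> (\<Delta>1 - {\<phi>}) \<union> (\<Delta>2 - {\<psi>}). supp R V s \<gamma>"
    have "supp R V s (Or \<phi> \<psi>)" using disjE.IH(1) s by blast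
    then obtain t u where tu: "s = t \<union> u" "supp R V t \<phi>" "supp R V u \<psi>" by auto
    have A1: "\<forall>\<gamma>\<in>\<Delta>1 - {\<phi>}. supp R V s \<gamma>" using s by blast
    have "\<forall>\<gamma>\<in>\<Delta>1 - {\<phi>}. supp R V t \<gamma>" using down_set[OF disjE.hyps(4) A1] tu(1) by blast
    then have "\<forall>\<gamma>\<in>\<Delta>1. supp R V t \<gamma>" using tu(2) by blast
    then have tc: "supp R V t \<chi>" using disjE.IH(2) by blast
    have A2: "\<forall>\<gamma>\<in>\<Delta>2 - {\<psi>}. supp R V s \<gamma>" using s by blast
    have "\<forall>\<gamma>\<in>\<Delta>2 - {\<psi>}. supp R V u \<gamma>" using down_set[OF disjE.hyps(5) A2] tu(1) by blast
    then have "\<forall>\<gamma>\<in>\<Delta>2. supp R V u \<gamma>" using tu(3) by blast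
    then have uc: "supp R V u \<chi>" using disjE.IH(3) by blast
    have "supp R V (t \<union> u) \<chi>" by (rule supp_union[OF disjE.hyps(6) tc uc])
    then show "supp R V s \<chi>" by (simp add: tu(1))
  qed
next
  case (disjMon \<Gamma> \<phi> \<psi> \<Delta> \<chi>)
  show ?case
  proof (intro allI impI)
    fix s assume s: "\<forall>\<gamma>\<in>\<Gamma> \<union> (\<Delta> - {\<psi>}). supp R V s \<gamma>"
    have "supp R V s (Or \<phi> \<psi>)" using disjMon.IH(1) s by blast
    then obtain t u where tu: "s = t \<union> u" "supp R V t \<phi>" "supp R V u \<psi>" by auto
    have A2: "\<forall>\<gamma>\<in>\<Delta> - {\<psi>}. supp R V s \<gamma>" using s by blast
    have "\<forall>\<gamma>\<in>\<Delta> - {\<psi>}. supp R V u \<gamma>" using down_set[OF disjMon.hyps(3) A2] tu(1) by blast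
    then have "\<forall>\<gamma>\<in>\<Delta>. supp R V u \<gamma>" using tu(3) by blast
    then have "supp R V u \<chi>" using disjMon.IH(2) by blast
    then show "supp R V s (Or \<phi> \<chi>)" using tu by (intro suppOrI[where t=t and u=u]) auto
  qed
next
  case (botDisj \<Gamma> \<phi>)
  show ?case
  proof (intro allI impI)
    fix s assume s: "\<forall>\<gamma>\<in>\<Gamma>. supp R V s \<gamma>"
    have "supp R V s (Or Bot \<phi>)" using botDisj.IH s by blast
    then obtain t u where tu: "s = t \<union> u" "supp R V t Bot" "supp R V u \<phi>"
      by (simp only: supp.simps) blast
    then show "supp R V s \<phi>" by simp
  qed
next
  case (botbotDisj \<Gamma> \<phi> \<psi>)
  show ?case
  proof (intro allI impI)
    fix s assume s: "\<forall>\<gamma>\<in>\<Gamma>. supp R V s \<gamma>"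
    have "supp R V s (Or BotBot \<phi>)" using botbotDisj.IH s by blast
    then show "supp R V s \<psi>" by simp
  qed
next
  case (diaMon \<Gamma>0 \<psi> \<phi> \<Gamma>)
  show ?case
  proof (intro allI impI)
    fix s assume s: "\<forall>\<gamma>\<in>\<Gamma>. supp R V s \<gamma>"
    have H: "supp R V s (Dia \<phi>)" using diaMon.IH(2) s by blast
    have M: "supp R V t \<psi>" if "supp R V t \<phi>" for t
      using diaMon.IH(1) diaMon.hyps(2) that by blast
    show "supp R V s (Dia \<psi>)"
      unfolding supp.simps
    proof
      fix w assume "w \<in> s"
      then obtain t where "t \<noteq> {}" "t \<subseteq> R `` {w}" "supp R V t \<phi>" using H unfolding supp.simps(7) by blast
      then show "\<exists>t. t \<noteq> {} \<and> t \<subseteq> R `` {w} \<and> supp R V t \<psi>" using M by blast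
    qed
  qed
next
  case (boxMon A \<Gamma>0 \<psi> G)
  show ?case
  proof (intro allI impI)
    fix s assume s: "\<forall>\<gamma>\<in>(\<Union>\<phi>\<in>A. G \<phi>). supp R V s \<gamma>"
    have B: "\<forall>\<phi>\<in>A. supp R V s (Box \<phi>)"
    proof
      fix \<phi> assume "\<phi> \<in> A"
      then have "\<forall>\<gamma>\<in>G \<phi>. supp R V s \<gamma>" using s by blast
      then show "supp R V s (Box \<phi>)" using boxMon.IH \<open>\<phi> \<in> A\<close> by blast
    qed
    show "supp R V s (Box \<psi>)"
      unfolding supp_Box
    proof
      fix w assume w: "w \<in> s"
      have "\<forall>\<phi>\<in>A. supp R V (R `` {w}) \<phi>" using B w by simp
      then have "\<forall>\<gamma>\<in>\<Gamma>0. supp R V (R `` {w}) \<gamma>" using boxMon.hyps(3) by blast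
      then show "supp R V (R `` {w}) \<psi>" using boxMon.IH(1) by blast
    qed
  qed
next
  case (negDia1 \<Gamma> \<phi>)
  then show ?case by (simp add: Box_def)
next
  case (negDia2 \<Gamma> \<phi>)
  then show ?case by (simp add: Box_def)
next
  case (diaNE \<Gamma> \<phi> \<psi>)
  show ?case
  proof (intro allI impI)
    fix s assume s: "\<forall>\<gamma>\<in>\<Gamma>. supp R V s \<gamma>"
    have H: "supp R V s (Dia (Or \<phi> (And \<psi> NE)))" using diaNE.IH s by blast
    show "supp R V s (Dia \<psi>)"
      unfolding supp.simps
    proof
      fix w assume "w \<in> s"
      then obtain t where t: "t \<noteq> {}" "t \<subseteq> R `` {w}" "supp R V t (Or \<phi> (And \<psi> NE))"
        using H unfolding supp.simps(7) by blast
      then obtain a b where "t = a \<union> b" "supp R V b \<psi>" "b \<noteq> {}" by auto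
      then show "\<exists>t. t \<noteq> {} \<and> t \<subseteq> R `` {w} \<and> supp R V t \<psi>" using t(2) by blast
    qed
  qed
next
  case (diaJoin \<Gamma> \<phi> \<Delta> \<psi>)
  show ?case
  proof (intro allI impI)
    fix s assume s: "\<forall>\<gamma>\<in>\<Gamma> \<union> \<Delta>. supp R V s \<gamma>"
    have H1: "supp R V s (Dia \<phi>)" using diaJoin.IH(1) s by blast
    have H2: "supp R V s (Dia \<psi>)" using diaJoin.IH(2) s by blast
    show "supp R V s (Dia (Or \<phi> \<psi>))"
      unfolding supp.simps(7)
    proof
      fix w
      assume w: "w \<in> s"
      have "\<exists>t. t \<noteq> {} \<and> t \<subseteq> R `` {w} \<and> supp R V t \<phi>"
        using H1 unfolding supp.simps(7) using w by (rule bspec)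
      then obtain t1 where t1: "t1 \<noteq> {}" "t1 \<subseteq> R `` {w}" "supp R V t1 \<phi>" by blast
      have "\<exists>t. t \<noteq> {} \<and> t \<subseteq> R `` {w} \<and> supp R V t \<psi>"
        using H2 unfolding supp.simps(7) using w by (rule bspec)
      then obtain t2 where t2: "t2 \<noteq> {}" "t2 \<subseteq> R `` {w}" "supp R V t2 \<psi>" by blast
      note t = t1 t2
      have o: "supp R V (t1 \<union> t2) (Or \<phi> \<psi>)" by (rule suppOrI[OF refl t1(3) t2(3)])
      have n: "t1 \<union> t2 \<noteq> {}" using t1(1) by simp
      have r: "t1 \<union> t2 \<subseteq> R `` {w}" by (rule Un_least[OF t1(2) t2(2)])
      show "\<exists>t. t \<noteq> {} \<and> t \<subseteq> R `` {w} \<and> supp R V t (Or \<phi> \<psi>)"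
        by (rule exI[of _ "t1 \<union> t2"], intro HOL.conjI n r o)
    qed
  qed
next
  case (boxNE \<Gamma> \<phi>)
  show ?case
  proof (intro allI impI)
    fix s assume s: "\<forall>\<gamma>\<in>\<Gamma>. supp R V s \<gamma>"
    have H: "supp R V s (Box (And \<phi> NE))" using boxNE.IH s by blast
    show "supp R V s (Dia \<phi>)"
      unfolding supp.simps
    proof
      fix w assume "w \<in> s"
      then have "R `` {w} \<noteq> {}" "supp R V (R `` {w}) \<phi>" using H by auto
      then show "\<exists>t. t \<noteq> {} \<and> t \<subseteq> R `` {w} \<and> supp R V t \<phi>" by blast
    qed
  qed
next
  case (boxDia \<Gamma> \<phi> \<Delta> \<psi>)
  show ?case
  proof (intro allI impI)
    fix s assume s: "\<forall>\<gamma>\<in>\<Gamma> \<union> \<Delta>. supp R V s \<gamma>"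
    have H1: "supp R V s (Box \<phi>)" using boxDia.IH(1) s by blast
    have H2: "supp R V s (Dia \<psi>)" using boxDia.IH(2) s by blast
    show "supp R V s (Box (Or \<phi> \<psi>))"
      unfolding supp_Box
    proof
      fix w assume w: "w \<in> s"
      then obtain t where t: "t \<noteq> {}" "t \<subseteq> R `` {w}" "supp R V t \<psi>"
        using H2 by (simp only: supp.simps) blast
      have "supp R V (R `` {w}) \<phi>" using H1 w by simp
      then show "supp R V (R `` {w}) (Or \<phi> \<psi>)"
        using t by (intro suppOrI[where t="R `` {w}" and u=t]) auto
    qed
  qed
next
  case (gdI1 \<Gamma> \<phi> \<psi>)
  then show ?case by simp
next
  case (gdI2 \<Gamma> \<phi> \<psi>)
  then show ?case by simp
next
  case (gdE \<Gamma> \<phi> \<psi> \<Delta>1 \<chi> \<Delta>2)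
  show ?case
  proof (intro allI impI)
    fix s assume s: "\<forall>\<gamma>\<in>\<Gamma> \<union> (\<Delta>1 - {\<phi>}) \<union> (\<Delta>2 - {\<psi>}). supp R V s \<gamma>"
    have "supp R V s (GD \<phi> \<psi>)" using gdE.IH(1) s by blast
    then have "supp R V s \<phi> \<or> supp R V s \<psi>" by simp
    then show "supp R V s \<chi>"
    proof
      assume "supp R V s \<phi>"
      then have "\<forall>\<gamma>\<in>\<Delta>1. supp R V s \<gamma>" using s by blast
      then show ?thesis using gdE.IH(2) by blast
    next
      assume "supp R V s \<psi>"
      then have "\<forall>\<gamma>\<in>\<Delta>2. supp R V s \<gamma>" using s by blast
      then show ?thesis using gdE.IH(3) by blast
    qed
  qed
next
  case (gdDistr \<Gamma> \<phi> \<psi> \<chi>)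
  show ?case
  proof (intro allI impI)
    fix s assume s: "\<forall>\<gamma>\<in>\<Gamma>. supp R V s \<gamma>"
    have "supp R V s (Or \<phi> (GD \<psi> \<chi>))" using gdDistr.IH s by blast
    then obtain t u where tu: "s = t \<union> u" "supp R V t \<phi>" "supp R V u \<psi> \<or> supp R V u \<chi>" by auto
    from tu(3) show "supp R V s (GD (Or \<phi> \<psi>) (Or \<phi> \<chi>))"
    proof
      assume "supp R V u \<psi>"
      then have "supp R V s (Or \<phi> \<psi>)" using tu by (intro suppOrI[where t=t and u=u]) auto
      then show ?thesis by simp
    next
      assume "supp R V u \<chi>"
      then have "supp R V s (Or \<phi> \<chi>)" using tu by (intro suppOrI[where t=t and u=u]) auto
      then show ?thesis by simp
    qed
  qed
next
  case (negGD1 \<Gamma> \<phi> \<psi>)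
  then show ?case by simp
next
  case (negGD2 \<Gamma> \<phi> \<psi>)
  then show ?case by simp
next
  case gdAx
  show ?case by simp
next
  case (diaGD1 \<Gamma> \<phi> \<psi>)
  show ?case
  proof (intro allI impI)
    fix s assume "\<forall>\<gamma>\<in>\<Gamma>. supp R V s \<gamma>"
    then have H: "supp R V s (Dia (GD \<phi> \<psi>))" using diaGD1.IH by blast
    let ?A = "{w\<in>s. \<exists>t. t \<noteq> {} \<and> t \<subseteq> R `` {w} \<and> supp R V t \<phi>}"
    let ?B = "{w\<in>s. \<exists>t. t \<noteq> {} \<and> t \<subseteq> R `` {w} \<and> supp R V t \<psi>}"
    have "s \<subseteq> ?A \<union> ?B"
    proof
      fix w assume w: "w \<in> s"
      have "\<exists>t. t \<noteq> {} \<and> t \<subseteq> R `` {w} \<and> supp R V t (GD \<phi> \<psi>)"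
        using H w unfolding supp.simps(7) by (rule bspec)
      then obtain t where t: "t \<noteq> {}" "t \<subseteq> R `` {w}" "supp R V t (GD \<phi> \<psi>)" by blast
      from t(3) have "supp R V t \<phi> \<or> supp R V t \<psi>" by simp
      then show "w \<in> ?A \<union> ?B"
      proof
        assume "supp R V t \<phi>"
        then have "w \<in> ?A" using w t(1) t(2) by blast
        then show ?thesis by (rule UnI1)
      next
        assume "supp R V t \<psi>"
        then have "w \<in> ?B" using w t(1) t(2) by blast
        then show ?thesis by (rule UnI2)
      qed
    qed
    then have "s = ?A \<union> ?B" by blast
    moreover have "supp R V ?A (Dia \<phi>)" by auto
    moreover have "supp R V ?B (Dia \<psi>)" by auto
    ultimately show "supp R V s (Or (Dia \<phi>) (Dia \<psi>))" by (intro suppOrI[where t="?A" and u="?B"])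
  qed
next
  case (diaGD2 \<Gamma> \<phi> \<psi>)
  show ?case
  proof (intro allI impI)
    fix s assume "\<forall>\<gamma>\<in>\<Gamma>. supp R V s \<gamma>"
    then have "supp R V s (Or (Dia \<phi>) (Dia \<psi>))" using diaGD2.IH by blast
    then obtain t u where tu: "s = t \<union> u" "supp R V t (Dia \<phi>)" "supp R V u (Dia \<psi>)"
      by (simp only: supp.simps(5)) blast
    show "supp R V s (Dia (GD \<phi> \<psi>))"
      unfolding supp.simps(7)
    proof
      fix w assume "w \<in> s"
      then have "w \<in> t \<or> w \<in> u" using tu by blast
      then show "\<exists>t. t \<noteq> {} \<and> t \<subseteq> R `` {w} \<and> supp R V t (GD \<phi> \<psi>)"
      proof
        assume w: "w \<in> t"
        have "\<exists>t. t \<noteq> {} \<and> t \<subseteq> R `` {w} \<and> supp R V t \<phi>"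
          using tu(2) w unfolding supp.simps(7) by (rule bspec)
        then obtain t' where "t' \<noteq> {}" "t' \<subseteq> R `` {w}" "supp R V t' \<phi>" by blast
        then show ?thesis by (intro exI[of _ t']) simp
      next
        assume w: "w \<in> u"
        have "\<exists>t. t \<noteq> {} \<and> t \<subseteq> R `` {w} \<and> supp R V t \<psi>"
          using tu(3) w unfolding supp.simps(7) by (rule bspec)
        then obtain t' where "t' \<noteq> {}" "t' \<subseteq> R `` {w}" "supp R V t' \<psi>" by blast
        then show ?thesis by (intro exI[of _ t']) simp
      qed
    qed
  qed
next
  case (boxGD1 \<Gamma> \<phi> \<psi>)
  show ?case
  proof (intro allI impI)
    fix s assume "\<forall>\<gamma>\<in>\<Gamma>. supp R V s \<gamma>"
    then have H: "supp R V s (Box (GD \<phi> \<psi>))" using boxGD1.IH by blast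
    let ?A = "{w\<in>s. supp R V (R `` {w}) \<phi>}"
    let ?B = "{w\<in>s. supp R V (R `` {w}) \<psi>}"
    have "s = ?A \<union> ?B" using H by auto
    moreover have "supp R V ?A (Box \<phi>)" by simp
    moreover have "supp R V ?B (Box \<psi>)" by simp
    ultimately show "supp R V s (Or (Box \<phi>) (Box \<psi>))" by (intro suppOrI[where t="?A" and u="?B"])
  qed
next
  case (boxGD2 \<Gamma> \<phi> \<psi>)
  show ?case
  proof (intro allI impI)
    fix s assume "\<forall>\<gamma>\<in>\<Gamma>. supp R V s \<gamma>"
    then have "supp R V s (Or (Box \<phi>) (Box \<psi>))" using boxGD2.IH by blast
    then obtain t u where tu: "s = t \<union> u" "supp R V t (Box \<phi>)" "supp R V u (Box \<psi>)"
      by (simp only: supp.simps(5)) blast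
    then show "supp R V s (Box (GD \<phi> \<psi>))" by auto
  qed
qed

theorem theorem4p3:
  fixes \<Phi> :: "form set" and \<psi> :: form
    and R :: "('w \<times> 'w) set" and V :: "nat \<Rightarrow> 'w set" and s :: "'w set"
  assumes "derivable \<Phi> \<psi>"
    and "\<forall>\<phi>\<in>\<Phi>. supp R V s \<phi>"
  shows "supp R V s \<psi>"
  using assms sound unfolding derivable_def by blast

end
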